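(* Let $n\equiv 3\pmod 4$ be a positive integer. Then $n$ is simultaneously a Carmichael number and a Gaussian Carmichael number if and only if $n$ is a $1$-Williams number and every prime $p$ dividing $n$ satisfies $p\equiv 3\pmod 4$.
   Context: A Carmichael number is a composite $n$ with $a^{n-1}\equiv 1\pmod n$ for all integers $a$ coprime to $n$ (equivalently, by Korselt's criterion, $n$ composite, square-free, and $p-1\mid n-1$ for every prime $p\mid n$). The function $\mathcal{F}$ is defined by $\mathcal{F}(n)=n-1$ if $n\equiv 1\pmod 4$, $\mathcal{F}(n)=n+1$ if $n\equiv 3 \pmod 4$, $\mathcal{F}(n)=n$ otherwise. A composite integer $n$ is a Gaussian Fermat pseudoprime to base $z\in\mathbb{Z}[i]$ if $\gcd(n,z\overline{z})=1$ and $(z/\overline{z})^{\mathcal{F}(n)}\equiv 1\pmod n$ in $\mathbb{Z}[i]/n\mathbb{Z}[i]$; a composite $n$ is a Gaussian Carmichael number if it is a Gaussian Fermat pseudoprime to every base $z\in\mathbb{Z}[i]$ with $\gcd(n,z\overline{z})=1$. A $1$-Williams number is a composite square-free integer $n$ such that for every prime $p\mid n$, $p+1\mid n+1$ and $p-1\mid n-1$. *)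

theory Defs
  imports Complex_Main "HOL-Number_Theory.Number_Theory" "HOL-Computational_Algebra.Squarefree"
begin

definition composite :: "nat \<Rightarrow> bool" where
  "composite n \<longleftrightarrow> n > 1 \<and> \<not> prime n"

definition carmichael :: "nat \<Rightarrow> bool" where
  "carmichael n \<longleftrightarrow> composite n \<and> (\<forall>a::nat. coprime a n \<longrightarrow> [a ^ (n - 1) = 1] (mod n))"

definition gauss_ints :: "complex set" where
  "gauss_ints = {z. Re z \<in> \<int> \<and> Im z \<in> \<int>}"

definition gcong :: "nat \<Rightarrow> complex \<Rightarrow> complex \<Rightarrow> bool" where
  "gcong n z w \<longleftrightarrow> (\<exists>q\<in>gauss_ints. z - w = of_nat n * q)"

definition gnorm :: "complex \<Rightarrow> int" where
  "gnorm z = \<lfloor>Re (z * cnj z)\<rfloor>"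

definition FF :: "nat \<Rightarrow> nat" where
  "FF n = (if n mod 4 = 1 then n - 1 else if n mod 4 = 3 then n + 1 else n)"

text \<open>(z / conj z)^F(n) = 1 in Z[i]/nZ[i], where 1/conj z is an inverse w of conj z modulo n.\<close>
definition gaussian_fermat_psp :: "nat \<Rightarrow> complex \<Rightarrow> bool" where
  "gaussian_fermat_psp n z \<longleftrightarrow> composite n \<and> z \<in> gauss_ints \<and> coprime (int n) (gnorm z) \<and>
     (\<exists>w\<in>gauss_ints. gcong n (cnj z * w) 1 \<and> gcong n ((z * w) ^ FF n) 1)"

definition gaussian_carmichael :: "nat \<Rightarrow> bool" where
  "gaussian_carmichael n \<longleftrightarrow> composite n \<and>
     (\<forall>z\<in>gauss_ints. coprime (int n) (gnorm z) \<longrightarrow> gaussian_fermat_psp n z)"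

definition williams1 :: "nat \<Rightarrow> bool" where
  "williams1 n \<longleftrightarrow> composite n \<and> squarefree n \<and>
     (\<forall>p. prime p \<and> p dvd n \<longrightarrow> (p + 1) dvd (n + 1) \<and> (p - 1) dvd (n - 1))"

end

theory Submission
  imports Defs
begin

definition gi :: "int \<Rightarrow> int \<Rightarrow> complex" where
  "gi a b = Complex (of_int a) (of_int b)"

lemma gauss_ints_iff: "z \<in> gauss_ints \<longleftrightarrow> (\<exists>a b. z = gi a b)"
proof
  assume "z \<in> gauss_ints"
  then obtain a b where "Re z = of_int a" "Im z = of_int b"
    unfolding gauss_ints_def by (auto elim!: Ints_cases)
  then show "\<exists>a b. z = gi a b" by (auto simp: gi_def complex_eq_iff)
qed (auto simp: gauss_ints_def gi_def)

lemma gi_in [simp]: "gi a b \<in> gauss_ints"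
  using gauss_ints_iff by blast

lemma gi_mult: "gi a b * gi c d = gi (a*c - b*d) (a*d + b*c)"
  by (simp add: gi_def complex_eq_iff)
lemma gi_add: "gi a b + gi c d = gi (a+c) (b+d)"
  by (simp add: gi_def complex_eq_iff)
lemma gi_diff: "gi a b - gi c d = gi (a-c) (b-d)"
  by (simp add: gi_def complex_eq_iff)
lemma gi_cnj: "cnj (gi a b) = gi a (-b)"
  by (simp add: gi_def complex_eq_iff)
lemma gi_one: "1 = gi 1 0"
  by (simp add: gi_def complex_eq_iff)
lemma gi_of_int: "of_int k = gi k 0"
  by (simp add: gi_def complex_eq_iff)
lemma gi_of_nat: "of_nat k = gi (int k) 0"
  by (simp add: gi_def complex_eq_iff)
lemma gi_ii: "\<i> = gi 0 1"
  by (simp add: gi_def complex_eq_iff)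
lemma gnorm_gi: "gnorm (gi a b) = a^2 + b^2"
proof -
  have "Re (gi a b * cnj (gi a b)) = of_int (a^2 + b^2)"
    by (simp add: gi_def power2_eq_square)
  then show ?thesis unfolding gnorm_def by (simp only: floor_of_int)
qed
lemma gi_eq_iff: "gi a b = gi c d \<longleftrightarrow> a = c \<and> b = d"
  by (simp add: gi_def complex_eq_iff)

lemma G_mult [simp]: "z \<in> gauss_ints \<Longrightarrow> w \<in> gauss_ints \<Longrightarrow> z * w \<in> gauss_ints"
  by (auto simp: gauss_ints_def)
lemma G_add [simp]: "z \<in> gauss_ints \<Longrightarrow> w \<in> gauss_ints \<Longrightarrow> z + w \<in> gauss_ints"
  by (auto simp: gauss_ints_def)
lemma G_diff [simp]: "z \<in> gauss_ints \<Longrightarrow> w \<in> gauss_ints \<Longrightarrow> z - w \<in> gauss_ints"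
  by (auto simp: gauss_ints_def)
lemma G_uminus [simp]: "z \<in> gauss_ints \<Longrightarrow> - z \<in> gauss_ints"
  by (auto simp: gauss_ints_def)
lemma G_cnj [simp]: "z \<in> gauss_ints \<Longrightarrow> cnj z \<in> gauss_ints"
  by (auto simp: gauss_ints_def)
lemma G_one [simp]: "1 \<in> gauss_ints" and G_zero [simp]: "0 \<in> gauss_ints"
  and G_of_nat [simp]: "of_nat k \<in> gauss_ints" and G_of_int [simp]: "of_int j \<in> gauss_ints"
  and G_ii [simp]: "\<i> \<in> gauss_ints"
  by (auto simp: gauss_ints_def)
lemma G_pow [simp]: "z \<in> gauss_ints \<Longrightarrow> z ^ k \<in> gauss_ints"
  by (induction k) auto
lemma G_sum: "(\<And>i. i \<in> A \<Longrightarrow> f i \<in> gauss_ints) \<Longrightarrow> sum f A \<in> gauss_ints"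
  by (induction A rule: infinite_finite_induct) auto

lemma gcong_gi: "gcong n (gi a b) (gi c d) \<longleftrightarrow> [a = c] (mod int n) \<and> [b = d] (mod int n)"
proof
  assume "gcong n (gi a b) (gi c d)"
  then obtain q where q: "q \<in> gauss_ints" "gi a b - gi c d = of_nat n * q"
    unfolding gcong_def by blast
  then obtain x y where "q = gi x y" using gauss_ints_iff by blast
  with q have "gi (a - c) (b - d) = gi (int n * x) (int n * y)"
    by (simp add: gi_diff gi_of_nat gi_mult)
  then have "a - c = int n * x" "b - d = int n * y" by (simp_all add: gi_eq_iff)
  then show "[a = c] (mod int n) \<and> [b = d] (mod int n)"
    by (simp add: cong_iff_dvd_diff)
next
  assume "[a = c] (mod int n) \<and> [b = d] (mod int n)"
  then obtain x y where "a - c = int n * x" "b - d = int n * y"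
    by (auto simp: cong_iff_dvd_diff elim!: dvdE)
  then have "gi a b - gi c d = of_nat n * gi x y"
    by (simp add: gi_diff gi_of_nat gi_mult)
  then show "gcong n (gi a b) (gi c d)" unfolding gcong_def by (intro bexI[of _ "gi x y"]) auto
qed

lemma gcong_refl: "gcong n z z"
  unfolding gcong_def by (rule bexI[of _ 0]) auto
lemma gcong_sym: "gcong n z w \<Longrightarrow> gcong n w z"
  unfolding gcong_def by (auto intro!: bexI[of _ "- _"] simp: algebra_simps)
  
lemma gcong_trans: "gcong n z w \<Longrightarrow> gcong n w v \<Longrightarrow> gcong n z v"
proof -
  assume "gcong n z w" "gcong n w v"
  then obtain q1 q2 where "q1 \<in> gauss_ints" "q2 \<in> gauss_ints" "z - w = of_nat n * q1" "w - v = of_nat n * q2"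
    unfolding gcong_def by blast
  then show ?thesis unfolding gcong_def
    by (intro bexI[of _ "q1 + q2"]) (auto simp: algebra_simps)
qed

lemma gcong_mult:
  assumes "z \<in> gauss_ints" "w' \<in> gauss_ints" "gcong n z z'" "gcong n w w'"
  shows "gcong n (z * w) (z' * w')"
proof -
  obtain q1 q2 where "q1 \<in> gauss_ints" "q2 \<in> gauss_ints" "z - z' = of_nat n * q1" "w - w' = of_nat n * q2"
    using assms unfolding gcong_def by blast
  moreover have "z * w - z' * w' = z * (w - w') + (z - z') * w'" by (simp add: algebra_simps)
  ultimately have "z * w - z' * w' = of_nat n * (z * q2 + q1 * w')" by (simp add: algebra_simps)
  moreover have "z * q2 + q1 * w' \<in> gauss_ints" using assms \<open>q1 \<in> _\<close> \<open>q2 \<in> _\<close> by simp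
  ultimately show ?thesis unfolding gcong_def by blast
qed

lemma gcong_pow:
  assumes "z \<in> gauss_ints" "w \<in> gauss_ints" "gcong n z w"
  shows "gcong n (z ^ k) (w ^ k)"
  by (induction k) (auto intro!: gcong_mult simp: assms gcong_refl)

lemma gcong_cnj: "gcong n z w \<Longrightarrow> gcong n (cnj z) (cnj w)"
proof -
  assume "gcong n z w"
  then obtain q where "q \<in> gauss_ints" "z - w = of_nat n * q" unfolding gcong_def by blast
  then have "cnj z - cnj w = of_nat n * cnj q" "cnj q \<in> gauss_ints"
    by (metis complex_cnj_diff complex_cnj_mult complex_cnj_of_nat, simp)
  then show ?thesis unfolding gcong_def by blast
qed

lemma gcong_dvd: "m dvd n \<Longrightarrow> gcong n z w \<Longrightarrow> gcong m z w"
  unfolding gcong_def by (auto elim!: dvdE intro!: bexI[of _ "of_nat _ * _"])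

lemma fermat_int:
  assumes "prime (p::nat)"
  shows "[a ^ p = a] (mod int p)"
proof -
  define b where "b = nat (a mod int p)"
  have p0: "p > 0" using assms prime_gt_0_nat by blast
  have bcong: "[int b = a] (mod int p)"
    using p0 by (simp add: b_def cong_def)
  have "[b ^ p = b] (mod p)"
  proof (cases "p dvd b")
    case True
    then have "[b = 0] (mod p)" by (simp add: cong_0_iff)
    moreover have "[b ^ p = 0 ^ p] (mod p)" using calculation by (rule cong_pow)
    moreover have "(0::nat) ^ p = 0" using p0 by simp
    ultimately have "[b ^ p = 0] (mod p)" by simp
    with \<open>[b = 0] (mod p)\<close> show ?thesis by (meson cong_sym cong_trans)
  next
    case False
    then have "[b ^ (p - 1) = 1] (mod p)" using fermat_theorem assms by blast
    then have "[b ^ (p - 1) * b = 1 * b] (mod p)" using cong_mult cong_refl by blast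
    moreover have "b ^ (p - 1) * b = b ^ p" using p0
      by (rule power_minus_mult)
    ultimately show ?thesis by simp
  qed
  then have "[int b ^ p = int b] (mod int p)"
    by (metis cong_int_iff of_nat_power)
  moreover have "[int b ^ p = a ^ p] (mod int p)" using bcong cong_pow by blast
  ultimately show ?thesis using bcong by (meson cong_sym cong_trans)
qed

lemma freshman:
  assumes "prime (p::nat)" "x \<in> gauss_ints" "y \<in> gauss_ints"
  shows "gcong p ((x + y) ^ p) (x ^ p + y ^ p)"
proof -
  have p0: "p > 0" using assms prime_gt_0_nat by blast
  define f where "f k = of_nat (p choose k) * x ^ k * y ^ (p - k)" for k
  have "(x + y) ^ p = (\<Sum>k\<le>p. f k)" unfolding f_def by (simp add: binomial_ring)
  also have "{..p} = insert 0 (insert p {1..<p})" using p0 by auto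
  also have "(\<Sum>k\<in>insert 0 (insert p {1..<p}). f k) = f 0 + (f p + (\<Sum>k\<in>{1..<p}. f k))"
    using p0 by (simp add: sum.insert)
  also have "f 0 + (f p + (\<Sum>k\<in>{1..<p}. f k)) = (x ^ p + y ^ p) + (\<Sum>k\<in>{1..<p}. f k)"
    by (simp add: f_def)
  finally have eq: "(x + y) ^ p = (x ^ p + y ^ p) + (\<Sum>k\<in>{1..<p}. f k)" .
  define g where "g k = of_nat ((p choose k) div p) * x ^ k * y ^ (p - k)" for k
  have "f k = of_nat p * g k" if "k \<in> {1..<p}" for k
  proof -
    have "p dvd (p choose k)" using that assms(1) by (intro dvd_choose_prime) auto
    then have "p choose k = p * ((p choose k) div p)" by simp
    then show ?thesis unfolding f_def g_def by (metis mult.assoc of_nat_mult)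
  qed
  then have "(\<Sum>k\<in>{1..<p}. f k) = of_nat p * (\<Sum>k\<in>{1..<p}. g k)"
    by (simp add: sum_distrib_left)
  moreover have "(\<Sum>k\<in>{1..<p}. g k) \<in> gauss_ints"
    using assms by (intro G_sum) (simp add: g_def)
  ultimately have "(x + y) ^ p - (x ^ p + y ^ p) = of_nat p * (\<Sum>k\<in>{1..<p}. g k)"
    "(\<Sum>k\<in>{1..<p}. g k) \<in> gauss_ints" using eq by simp_all
  then show ?thesis unfolding gcong_def by blast
qed

lemma ii_pow_3mod4:
  assumes "p mod 4 = (3::nat)"
  shows "\<i> ^ p = - \<i>"
proof -
  have "p = 4 * (p div 4) + 3" using assms by presburger
  then have "\<i> ^ p = (\<i> ^ 4) ^ (p div 4) * \<i> ^ 3"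
    by (metis power_add power_mult)
  also have "\<dots> = - \<i>" by (simp add: power_numeral_reduce)
  finally show ?thesis .
qed

lemma frobenius:
  assumes "prime (p::nat)" "p mod 4 = 3" "v \<in> gauss_ints"
  shows "gcong p (v ^ p) (cnj v)"
proof -
  obtain a b where v: "v = gi a b" using assms gauss_ints_iff by blast
  have vs: "v = of_int a + of_int b * \<i>" by (simp add: v gi_def complex_eq_iff)
  have 1: "gcong p (v ^ p) ((of_int a) ^ p + (of_int b * \<i>) ^ p)"
    unfolding vs by (rule freshman) (use assms in auto)
  have "(of_int a :: complex) ^ p + (of_int b * \<i>) ^ p = gi (a ^ p) (- (b ^ p))"
    using ii_pow_3mod4[OF assms(2)] by (simp add: power_mult_distrib gi_def complex_eq_iff)
  moreover have "gcong p (gi (a ^ p) (- (b ^ p))) (gi a (-b))"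
    unfolding gcong_gi using fermat_int[OF assms(1)] by (auto intro: cong_minus_minus_iff[THEN iffD2])
  ultimately have "gcong p ((of_int a) ^ p + (of_int b * \<i>) ^ p) (cnj v)"
    by (simp add: v gi_cnj)
  with 1 show ?thesis using gcong_trans by blast
qed

lemma norm_one_pow:
  assumes "prime (p::nat)" "p mod 4 = 3" "z \<in> gauss_ints" "w \<in> gauss_ints"
    and "gcong p (cnj z * w) 1"
  shows "gcong p ((z * w) ^ (p + 1)) 1"
proof -
  let ?u = "z * w"
  have uG: "?u \<in> gauss_ints" using assms by simp
  have "(z * w) ^ (p + 1) = ?u * ?u ^ p" by simp
  have 1: "gcong p (?u * ?u ^ p) (?u * cnj ?u)"
    using uG assms by (intro gcong_mult frobenius assms gcong_refl) auto
  have eq: "?u * cnj ?u = (cnj z * w) * cnj (cnj z * w)" by (simp add: algebra_simps)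
  have g: "gcong p ((cnj z * w) * cnj (cnj z * w)) (1 * cnj 1)"
    using assms by (intro gcong_mult gcong_cnj) auto
  have "gcong p (?u * cnj ?u) 1" using g by (simp only: eq mult_1 complex_cnj_one)
  with 1 show ?thesis using gcong_trans by (metis power_Suc Suc_eq_plus1)
qed

lemma sqf_cong:
  fixes n :: nat and x y :: int
  assumes "squarefree n" "\<And>p. prime p \<Longrightarrow> p dvd n \<Longrightarrow> [x = y] (mod int p)"
  shows "[x = y] (mod int n)"
proof (cases "x = y")
  case True then show ?thesis by simp
next
  case False
  define d where "d = nat \<bar>x - y\<bar>"
  have n0: "n \<noteq> 0" using assms(1) by (metis not_squarefree_0)
  have d0: "d \<noteq> 0" using False by (simp add: d_def)
  have "n dvd d"
  proof (rule multiplicity_le_imp_dvd[OF n0])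
    fix p :: nat assume p: "prime p"
    show "multiplicity p n \<le> multiplicity p d"
    proof (cases "p dvd n")
      case True
      have "multiplicity p n \<le> 1" using assms(1) n0 p squarefree_factorial_semiring'' by blast
      moreover have "int p dvd (x - y)" using assms(2)[OF p True] by (simp add: cong_iff_dvd_diff)
      then have "int p dvd int d" unfolding d_def by simp
      then have "p dvd d" by (simp only: of_nat_dvd_iff)
      then have "multiplicity p d \<ge> 1" using d0 p
        by (simp add: Suc_le_eq prime_multiplicity_gt_zero_iff)
      ultimately show ?thesis by linarith
    next
      case False
      then show ?thesis by (simp add: not_dvd_imp_multiplicity_0)
    qed
  qed
  then have "int n dvd int d" by (simp only: of_nat_dvd_iff)
  then have "int n dvd (x - y)" unfolding d_def by simp
  then show ?thesis by (simp add: cong_iff_dvd_diff)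
qed

lemma cong_m1_ne_1:
  assumes "prime (p::nat)" "p > 2"
  shows "\<not> [1 = -1] (mod int p)" "\<not> [-1 = 0] (mod int p)"
proof -
  show "\<not> [1 = -1] (mod int p)"
  proof
    assume "[1 = -1] (mod int p)"
    then have "int p dvd 2" by (simp add: cong_iff_dvd_diff)
    then have "p dvd 2" by presburger
    then show False using dvd_imp_le[of p 2] assms by simp
  qed
  show "\<not> [-1 = 0] (mod int p)"
  proof
    assume "[-1 = 0] (mod int p)"
    then have "int p dvd 1" by (simp add: cong_iff_dvd_diff)
    then show False using assms by simp
  qed
qed

lemma minus1_nonres:
  assumes "prime (p::nat)" "p mod 4 = 3"
  shows "\<not> QuadRes (int p) (-1)"
proof
  assume Q: "QuadRes (int p) (-1)"
  have p2: "2 < p" using assms prime_ge_2_nat[OF assms(1)] by presburger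
  note ne = cong_m1_ne_1[OF assms(1) p2]
  have "Legendre (-1) (int p) = 1" using Q ne by (simp add: Legendre_def)
  moreover have "[Legendre (-1) (int p) = (-1) ^ ((p - 1) div 2)] (mod int p)"
    using euler_criterion assms(1) p2 by blast
  moreover have "odd ((p - 1) div 2)" using assms(2) by presburger
  then have "(-1::int) ^ ((p - 1) div 2) = -1" by simp
  ultimately show False using ne by simp
qed

lemma minus1_res:
  assumes "prime (p::nat)" "p mod 4 = 1"
  shows "\<exists>s. [s^2 = -1] (mod int p)"
proof -
  have p2: "2 < p" using assms prime_ge_2_nat[OF assms(1)] by presburger
  note ne = cong_m1_ne_1[OF assms(1) p2]
  have "[Legendre (-1) (int p) = (-1) ^ ((p - 1) div 2)] (mod int p)"
    using euler_criterion assms(1) p2 by blast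
  moreover have "even ((p - 1) div 2)" using assms(2) by presburger
  then have "(-1::int) ^ ((p - 1) div 2) = 1" by simp
  ultimately have "[Legendre (-1) (int p) = 1] (mod int p)" by simp
  then have "QuadRes (int p) (-1)" using ne
    by (auto simp: Legendre_def split: if_splits dest: cong_sym)
  then show ?thesis by (simp add: QuadRes_def)
qed

lemma sumsq_zero:
  assumes "prime (p::nat)" "p mod 4 = 3" "int p dvd (a^2 + b^2)"
  shows "int p dvd a"
proof (rule ccontr)
  assume na: "\<not> int p dvd a"
  have pi: "prime (int p)" using assms(1) by simp
  then have "coprime a (int p)" using prime_imp_coprime[OF pi na] by (simp add: ac_simps)
  then obtain c where "[a * c = 1] (mod int p)" using cong_solve_coprime_int by blast
  then have c: "int p dvd (a * c - 1)" by (simp add: cong_iff_dvd_diff)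
  have "(b*c)^2 + 1 = c^2 * (a^2 + b^2) - (a*c - 1) * (a*c + 1)"
    by (simp add: algebra_simps power2_eq_square)
  also have "int p dvd \<dots>" by (rule dvd_diff[OF dvd_mult[OF assms(3)] dvd_mult2[OF c]])
  finally have "[(b*c)^2 = -1] (mod int p)" by (simp add: cong_iff_dvd_diff)
  then have "QuadRes (int p) (-1)" unfolding QuadRes_def by blast
  then show False using minus1_nonres assms by blast
qed

lemma sumsq_zero':
  assumes "prime (p::nat)" "p mod 4 = 3" "int p dvd (a^2 + b^2)"
  shows "int p dvd a" "int p dvd b"
  using sumsq_zero[OF assms] sumsq_zero[OF assms(1,2), of b a] assms(3) by (simp_all add: ac_simps)

definition GF :: "int \<Rightarrow> (int \<times> int) ring" where
  "GF p = \<lparr>carrier = {0..<p} \<times> {0..<p},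
     mult = (\<lambda>x y. ((fst x * fst y - snd x * snd y) mod p, (fst x * snd y + snd x * fst y) mod p)),
     one = (1, 0), zero = (0, 0),
     add = (\<lambda>x y. ((fst x + fst y) mod p, (snd x + snd y) mod p))\<rparr>"

lemma modh1: "(a mod p * b - c mod p * d) mod p = (a*b - c*d) mod (p::int)"
  by (subst (1) mod_diff_eq[symmetric]) (simp add: mod_simps)
lemma modh2: "(a mod p * b + c mod p * d) mod p = (a*b + c*d) mod (p::int)"
  by (subst (1) mod_add_eq[symmetric]) (simp add: mod_simps)
lemma modh3: "(a * (b mod p) - c * (d mod p)) mod p = (a*b - c*d) mod (p::int)"
  by (subst (1) mod_diff_eq[symmetric]) (simp add: mod_simps)
lemma modh4: "(a * (b mod p) + c * (d mod p)) mod p = (a*b + c*d) mod (p::int)"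
  by (subst (1) mod_add_eq[symmetric]) (simp add: mod_simps)

lemmas modh = modh1 modh2 modh3 modh4

lemma GF_carrier: "carrier (GF p) = {0..<p} \<times> {0..<p}" by (simp add: GF_def)
lemma GF_mult: "(a, b) \<otimes>\<^bsub>GF p\<^esub> (c, d) = ((a*c - b*d) mod p, (a*d + b*c) mod p)"
  by (simp add: GF_def)
lemma GF_add: "(a, b) \<oplus>\<^bsub>GF p\<^esub> (c, d) = ((a + c) mod p, (b + d) mod p)"
  by (simp add: GF_def)
lemma GF_one: "\<one>\<^bsub>GF p\<^esub> = (1, 0)" by (simp add: GF_def)
lemma GF_zero: "\<zero>\<^bsub>GF p\<^esub> = (0, 0)" by (simp add: GF_def)

lemmas GF_simps = GF_carrier GF_mult GF_add GF_one GF_zero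

lemma GF_cring:
  assumes p: "p > 1"
  shows "cring (GF p)"
proof (rule cringI)
  show "abelian_group (GF p)"
  proof (rule abelian_groupI)
    fix x y z assume "x \<in> carrier (GF p)" "y \<in> carrier (GF p)" "z \<in> carrier (GF p)"
    then show "x \<oplus>\<^bsub>GF p\<^esub> y \<oplus>\<^bsub>GF p\<^esub> z = x \<oplus>\<^bsub>GF p\<^esub> (y \<oplus>\<^bsub>GF p\<^esub> z)"
      by (cases x, cases y, cases z) (simp add: GF_simps mod_simps add.assoc)
  next
    fix x y assume "x \<in> carrier (GF p)" "y \<in> carrier (GF p)"
    then show "x \<oplus>\<^bsub>GF p\<^esub> y \<in> carrier (GF p)"
      using p by (cases x, cases y) (simp add: GF_simps)
    show "x \<oplus>\<^bsub>GF p\<^esub> y = y \<oplus>\<^bsub>GF p\<^esub> x"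
      by (cases x, cases y) (simp add: GF_simps add.commute)
  next
    show "\<zero>\<^bsub>GF p\<^esub> \<in> carrier (GF p)" using p by (simp add: GF_simps)
  next
    fix x assume "x \<in> carrier (GF p)"
    then show "\<zero>\<^bsub>GF p\<^esub> \<oplus>\<^bsub>GF p\<^esub> x = x"
      by (cases x) (simp add: GF_simps)
    show "\<exists>y\<in>carrier (GF p). y \<oplus>\<^bsub>GF p\<^esub> x = \<zero>\<^bsub>GF p\<^esub>"
    proof (cases x)
      case (Pair a b)
      show ?thesis
        by (rule bexI[of _ "((-a) mod p, (-b) mod p)"]) (use p Pair in \<open>simp_all add: GF_simps mod_simps\<close>)
    qed
  qed
next
  show "comm_monoid (GF p)"
  proof (rule comm_monoidI)
    fix x y z assume "x \<in> carrier (GF p)" "y \<in> carrier (GF p)" "z \<in> carrier (GF p)"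
    then show "x \<otimes>\<^bsub>GF p\<^esub> y \<otimes>\<^bsub>GF p\<^esub> z = x \<otimes>\<^bsub>GF p\<^esub> (y \<otimes>\<^bsub>GF p\<^esub> z)"
      by (cases x, cases y, cases z) (simp add: GF_simps modh, simp add: algebra_simps)
  next
    fix x y assume "x \<in> carrier (GF p)" "y \<in> carrier (GF p)"
    then show "x \<otimes>\<^bsub>GF p\<^esub> y \<in> carrier (GF p)"
      using p by (cases x, cases y) (simp add: GF_simps)
    show "x \<otimes>\<^bsub>GF p\<^esub> y = y \<otimes>\<^bsub>GF p\<^esub> x"
      by (cases x, cases y) (simp add: GF_simps algebra_simps)
  next
    show "\<one>\<^bsub>GF p\<^esub> \<in> carrier (GF p)" using p by (simp add: GF_simps)
  next
    fix x assume "x \<in> carrier (GF p)"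
    then show "\<one>\<^bsub>GF p\<^esub> \<otimes>\<^bsub>GF p\<^esub> x = x"
      by (cases x) (simp add: GF_simps)
  qed
next
  fix x y z assume "x \<in> carrier (GF p)" "y \<in> carrier (GF p)" "z \<in> carrier (GF p)"
  then show "(x \<oplus>\<^bsub>GF p\<^esub> y) \<otimes>\<^bsub>GF p\<^esub> z = x \<otimes>\<^bsub>GF p\<^esub> z \<oplus>\<^bsub>GF p\<^esub> y \<otimes>\<^bsub>GF p\<^esub> z"
    by (cases x, cases y, cases z) (simp add: GF_simps modh mod_simps, simp add: algebra_simps)
qed

lemma GF_field:
  assumes "prime (p::nat)" "p mod 4 = 3"
  shows "field (GF (int p))"
proof -
  have p1: "int p > 1" using assms prime_gt_1_nat by auto
  interpret R: cring "GF (int p)" using GF_cring[OF p1] .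
  show ?thesis
  proof (rule R.cring_fieldI2)
    show "\<zero>\<^bsub>GF (int p)\<^esub> \<noteq> \<one>\<^bsub>GF (int p)\<^esub>" by (simp add: GF_simps)
  next
    fix x assume x: "x \<in> carrier (GF (int p))" "x \<noteq> \<zero>\<^bsub>GF (int p)\<^esub>"
    obtain a b where ab: "x = (a, b)" by (cases x)
    have range: "0 \<le> a" "a < int p" "0 \<le> b" "b < int p" using x ab by (auto simp: GF_simps)
    have ndvd: "\<not> int p dvd (a^2 + b^2)"
    proof
      assume "int p dvd (a^2 + b^2)"
      then have "int p dvd a" "int p dvd b" using sumsq_zero' assms by blast+
      then have "a = 0" "b = 0" using range by (auto simp: zdvd_not_zless dest: zdvd_imp_le)
      then show False using x ab by (simp add: GF_simps)
    qed
    have "prime (int p)" using assms by simp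
    then have "coprime (a^2 + b^2) (int p)" using prime_imp_coprime[OF _ ndvd] by (simp add: ac_simps)
    then obtain t where t: "[(a^2 + b^2) * t = 1] (mod int p)" using cong_solve_coprime_int by blast
    show "\<exists>y\<in>carrier (GF (int p)). x \<otimes>\<^bsub>GF (int p)\<^esub> y = \<one>\<^bsub>GF (int p)\<^esub>"
    proof (rule bexI[of _ "((a * t) mod int p, (- b * t) mod int p)"])
      have "(a * (a * t) - b * (- b * t)) mod int p = ((a^2 + b^2) * t) mod int p"
        by (simp add: algebra_simps power2_eq_square)
      also have "\<dots> = 1" using t p1 by (simp add: cong_def)
      finally have 1: "(a * (a * t) - b * (- b * t)) mod int p = 1" .
      show "x \<otimes>\<^bsub>GF (int p)\<^esub> ((a * t) mod int p, (- b * t) mod int p) = \<one>\<^bsub>GF (int p)\<^esub>"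
        using 1 by (simp add: ab GF_simps modh algebra_simps)
      show "((a * t) mod int p, (- b * t) mod int p) \<in> carrier (GF (int p))"
        using p1 by (simp add: GF_simps)
    qed
  qed
qed

definition phi :: "int \<Rightarrow> complex \<Rightarrow> int \<times> int" where
  "phi p z = (\<lfloor>Re z\<rfloor> mod p, \<lfloor>Im z\<rfloor> mod p)"

lemma phi_gi: "phi p (gi a b) = (a mod p, b mod p)"
  by (simp add: phi_def gi_def)

lemma phi_carrier: "p > 0 \<Longrightarrow> phi p z \<in> carrier (GF p)"
  by (simp add: phi_def GF_simps)

lemma phi_mult:
  assumes "z \<in> gauss_ints" "w \<in> gauss_ints"
  shows "phi p (z * w) = phi p z \<otimes>\<^bsub>GF p\<^esub> phi p w"
proof -
  obtain a b c d where "z = gi a b" "w = gi c d" using assms gauss_ints_iff by metis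
  then show ?thesis by (simp add: gi_mult phi_gi GF_simps modh)
qed

lemma phi_one: "p > 1 \<Longrightarrow> phi p 1 = \<one>\<^bsub>GF p\<^esub>"
  by (simp add: phi_def GF_simps)

lemma phi_pow:
  assumes "z \<in> gauss_ints"
  shows "p > 1 \<Longrightarrow> phi p (z ^ k) = phi p z [^]\<^bsub>GF p\<^esub> k"
proof (induction k)
  case 0 then show ?case by (simp add: phi_one)
next
  case (Suc k)
  have "phi p (z ^ Suc k) = phi p (z ^ k * z)" by (simp only: power_Suc2)
  also have "\<dots> = phi p (z ^ k) \<otimes>\<^bsub>GF p\<^esub> phi p z" using assms by (simp add: phi_mult)
  also have "\<dots> = phi p z [^]\<^bsub>GF p\<^esub> Suc k" using Suc by simp
  finally show ?case .
qed

lemma phi_gcong: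
  assumes "z \<in> gauss_ints" "w \<in> gauss_ints"
  shows "phi (int p) z = phi (int p) w \<longleftrightarrow> gcong p z w"
proof -
  obtain a b c d where "z = gi a b" "w = gi c d" using assms gauss_ints_iff by metis
  then show ?thesis by (simp add: phi_gi gcong_gi cong_def)
qed

lemma GF_finite: "finite (carrier (GF p))"
  by (simp add: GF_simps)

lemma GF_card: "card (carrier (GF (int p))) = p * p"
  by (simp add: GF_simps card_cartesian_product)

lemma GF_gen:
  assumes "prime (p::nat)" "p mod 4 = 3"
  shows "\<exists>g\<in>carrier (GF (int p)). g \<noteq> \<zero>\<^bsub>GF (int p)\<^esub> \<and>
           (\<forall>k. g [^]\<^bsub>GF (int p)\<^esub> k = \<one>\<^bsub>GF (int p)\<^esub> \<longleftrightarrow> (p * p - 1) dvd k)"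
proof -
  define R where "R = GF (int p)"
  interpret F: field R unfolding R_def using GF_field[OF assms] .
  interpret M: group "mult_of R" by (rule F.field_mult_group)
  have fin: "finite (carrier R)" unfolding R_def by (rule GF_finite)
  have finM: "finite (carrier (mult_of R))" using fin by (simp add: F.finite_mult_of)
  have oR: "order R = p * p" unfolding order_def R_def by (rule GF_card)
  have ordM: "order (mult_of R) = p * p - 1"
    using F.order_mult_of[OF fin] oR by simp
  obtain g where g: "g \<in> carrier (mult_of R)" and gen: "carrier (mult_of R) = {g [^]\<^bsub>R\<^esub> i | i::nat. i \<in> UNIV}"
    using F.finite_field_mult_group_has_gen[OF fin] by blast
  have powM: "(([^]\<^bsub>mult_of R\<^esub>) :: _ \<Rightarrow> nat \<Rightarrow> _) = ([^]\<^bsub>R\<^esub>)" by (rule nat_pow_mult_of)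
  have "carrier (mult_of R) = {g [^]\<^bsub>mult_of R\<^esub> x | x. x \<in> {0 .. M.ord g - 1}}"
    using gen M.ord_elems[OF finM g] by (simp add: powM)
  also have "\<dots> = (\<lambda>x. g [^]\<^bsub>mult_of R\<^esub> x) ` {0 .. M.ord g - 1}" by auto
  finally have "card (carrier (mult_of R)) \<le> card {0 .. M.ord g - 1}"
    by (metis card_image_le finite_atLeastAtMost)
  moreover have "M.ord g \<ge> 1" using M.ord_ge_1[OF finM g] .
  ultimately have "order (mult_of R) \<le> M.ord g" unfolding order_def by simp
  moreover have "M.ord g \<le> order (mult_of R)" using M.ord_le_group_order[OF finM g] .
  ultimately have ordg: "M.ord g = p * p - 1" using ordM by simp
  have "\<forall>k. g [^]\<^bsub>R\<^esub> k = \<one>\<^bsub>R\<^esub> \<longleftrightarrow> (p * p - 1) dvd k"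
    using M.pow_eq_id[OF g] ordg by (simp add: powM)
  moreover have "g \<in> carrier R" "g \<noteq> \<zero>\<^bsub>R\<^esub>" using g by auto
  ultimately show ?thesis unfolding R_def by blast
qed

lemma FF3: "n mod 4 = 3 \<Longrightarrow> FF n = n + 1"
  by (simp add: FF_def)

lemma korselt_rev:
  assumes sq: "squarefree n" and kp: "\<And>p. prime p \<Longrightarrow> p dvd n \<Longrightarrow> (p - 1) dvd (n - 1)"
    and cop: "coprime a n"
  shows "[a ^ (n - 1) = 1] (mod n)"
proof -
  have "[int (a ^ (n - 1)) = int 1] (mod int n)"
  proof (rule sqf_cong[OF sq])
    fix p assume p: "prime p" "p dvd n"
    have na: "\<not> p dvd a"
    proof
      assume "p dvd a"
      then have "is_unit p" using cop p(2) coprime_common_divisor by blast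
      then show False using p(1) by (simp add: not_prime_unit)
    qed
    have f: "[a ^ (p - 1) = 1] (mod p)" using fermat_theorem p(1) na by blast
    obtain k where k: "n - 1 = (p - 1) * k" using kp[OF p] by (elim dvdE)
    have "[(a ^ (p - 1)) ^ k = 1 ^ k] (mod p)" using f by (rule cong_pow)
    moreover have "a ^ (n - 1) = (a ^ (p - 1)) ^ k" by (simp only: k power_mult)
    ultimately have "[a ^ (n - 1) = 1] (mod p)" by (simp only: power_one)
    then show "[int (a ^ (n - 1)) = int 1] (mod int p)" by (simp only: cong_int_iff)
  qed
  then show ?thesis by (simp only: cong_int_iff)
qed

lemma gauss_rev:
  assumes sq: "squarefree n" and n4: "n mod 4 = 3" and comp: "composite n"
    and hp: "\<And>p. prime p \<Longrightarrow> p dvd n \<Longrightarrow> p mod 4 = 3 \<and> (p + 1) dvd (n + 1)"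
  shows "gaussian_carmichael n"
proof -
  have main: "\<exists>w\<in>gauss_ints. gcong n (cnj z * w) 1 \<and> gcong n ((z * w) ^ FF n) 1"
    if zG: "z \<in> gauss_ints" and cop: "coprime (int n) (gnorm z)" for z
  proof -
    obtain a b where z: "z = gi a b" using zG gauss_ints_iff by blast
    define N where "N = a^2 + b^2"
    have "coprime N (int n)" using cop by (simp add: z gnorm_gi N_def ac_simps)
    then obtain t where t: "[N * t = 1] (mod int n)" using cong_solve_coprime_int by blast
    define w where "w = gi (t * a) (t * b)"
    have wG: "w \<in> gauss_ints" by (simp add: w_def)
    have c1: "cnj z * w = gi (N * t) 0"
      by (simp add: z w_def gi_cnj gi_mult gi_eq_iff N_def algebra_simps power2_eq_square)
    have g1: "gcong n (cnj z * w) 1" unfolding c1 gi_one gcong_gi using t by simp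
    define u where "u = z * w"
    have uG: "u \<in> gauss_ints" using zG wG by (simp add: u_def)
    obtain c d where cd: "u ^ (n + 1) = gi c d" using uG gauss_ints_iff by (meson G_pow)
    have loc: "[c = 1] (mod int p) \<and> [d = 0] (mod int p)" if p: "prime p" "p dvd n" for p
    proof -
      obtain k where k: "n + 1 = (p + 1) * k" using hp[OF p] by (elim conjE dvdE)
      have p3: "p mod 4 = 3" using hp[OF p] by blast
      have "gcong p (cnj z * w) 1" using g1 p(2) gcong_dvd by blast
      then have "gcong p (u ^ (p + 1)) 1" unfolding u_def using norm_one_pow p(1) p3 zG wG by blast
      then have "gcong p ((u ^ (p + 1)) ^ k) (1 ^ k)" using uG by (intro gcong_pow) auto
      moreover have e: "(u ^ (p + 1)) ^ k = gi c d" by (simp only: power_mult[symmetric] k[symmetric] cd)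
      ultimately have "gcong p (gi c d) 1" by (simp only: e power_one)
      then have "gcong p (gi c d) (gi 1 0)" by (simp only: gi_one[symmetric])
      then show ?thesis by (simp add: gcong_gi)
    qed
    have "[c = 1] (mod int n)" "[d = 0] (mod int n)" using loc by (auto intro!: sqf_cong[OF sq])
    then have "gcong n (gi c d) (gi 1 0)" by (simp add: gcong_gi)
    then have "gcong n (u ^ (n + 1)) 1" by (simp only: cd gi_one[symmetric])
    then show ?thesis using wG g1 by (auto simp: FF3[OF n4] u_def)
  qed
  show ?thesis using comp main unfolding gaussian_carmichael_def gaussian_fermat_psp_def by blast
qed

lemma one_plus_pow: "\<exists>c. (1 + m) ^ k = 1 + k * m + m^2 * (c::nat)"
proof (induction k)
  case 0 then show ?case by simp
next
  case (Suc k)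
  then obtain c where c: "(1 + m) ^ k = 1 + k * m + m^2 * c" by blast
  have "(1 + m) ^ Suc k = (1 + k * m + m^2 * c) * (1 + m)" by (simp only: power_Suc2 c)
  also have "\<dots> = 1 + Suc k * m + m^2 * (k + c + m * c)"
    by (simp add: algebra_simps power2_eq_square)
  finally show ?case by blast
qed

lemma carm_sqf:
  assumes carm: "carmichael n"
  shows "squarefree n"
proof -
  have n1: "n > 1" using carm by (simp add: carmichael_def composite_def)
  have "\<not> p^2 dvd n" if p: "prime p" for p
  proof
    assume "p^2 dvd n"
    define m where "m = n div p"
    have "p dvd p^2" by simp
    then have pn: "p dvd n" using \<open>p^2 dvd n\<close> by (rule dvd_trans)
    have nm: "n = p * m" using pn by (simp add: m_def)
    have "p * p dvd p * m" using \<open>p^2 dvd n\<close> nm by (simp add: power2_eq_square)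
    then have pm: "p dvd m" using nat_mult_dvd_cancel1[of p p m] prime_gt_0_nat[OF p] by simp
    have m0: "m > 0" using nm n1 by (cases m) auto
    obtain j where j: "m = p * j" using pm by (elim dvdE)
    have e: "m * m = n * j" using nm j by (simp add: ac_simps)
    have nmm: "n dvd m * m" by (simp add: e)
    have "coprime (Suc m) (m * m)" by simp
    then have cop: "coprime (1 + m) n" using coprime_divisors[OF dvd_refl nmm] by simp
    then have "[(1 + m) ^ (n - 1) = 1] (mod n)" using carm by (simp add: carmichael_def)
    moreover obtain c where c: "(1 + m) ^ (n - 1) = 1 + (n - 1) * m + m^2 * c" using one_plus_pow by blast
    ultimately have "[1 + ((n - 1) * m + m^2 * c) = 1 + 0] (mod n)" by (simp add: add.assoc)
    then have "[(n - 1) * m + m^2 * c = 0] (mod n)" by (simp only: cong_add_lcancel_nat)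
    then have "n dvd (n - 1) * m + m^2 * c" by (simp add: cong_0_iff)
    moreover have "n dvd m^2 * c" using nmm by (simp add: power2_eq_square)
    ultimately have "n dvd (n - 1) * m" by (simp add: dvd_add_left_iff)
    then have "p * m dvd (n - 1) * m" using nm by simp
    then have "p dvd n - 1" using m0 by simp
    then have "p dvd n - (n - 1)" using pn by (simp add: dvd_diff_nat)
    then have "p dvd 1" using n1 by simp
    then show False using p by simp
  qed
  then show ?thesis using n1 by (simp add: squarefree_factorial_semiring)
qed

lemma sqf_split:
  fixes n p :: nat
  assumes "squarefree n" "prime p" "p dvd n"
  shows "n = p * (n div p) \<and> coprime p (n div p)"
proof
  show "n = p * (n div p)" using assms(3) by simp
  have n0: "n \<noteq> 0" using assms(1) by (metis not_squarefree_0)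
  have "\<not> p dvd n div p"
  proof
    assume "p dvd n div p"
    then obtain j where j: "n div p = p * j" by (elim dvdE)
    have nd: "n = p * (n div p)" using assms(3) by simp
    have "n = p * (p * j)" using nd unfolding j .
    then have "n = p^2 * j" by (simp add: power2_eq_square mult.assoc)
    then have "p^2 dvd n" by simp
    moreover have "squarefree n \<longleftrightarrow> (\<forall>p. prime p \<longrightarrow> \<not> p^2 dvd n)"
      by (rule squarefree_factorial_semiring[OF n0])
    ultimately show False using assms(1,2) by blast
  qed
  then show "coprime p (n div p)" using assms(2) by (simp add: prime_imp_coprime)
qed

lemma crt_pair:
  fixes n p :: nat
  assumes "squarefree n" "prime p" "p dvd n"
  shows "\<exists>a. [a = a0] (mod int p) \<and> [a = a1] (mod int (n div p))"
proof -
  have "coprime p (n div p)" using sqf_split[OF assms] by blast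
  then have "coprime (int p) (int (n div p))" by simp
  then show ?thesis using binary_chinese_remainder_int by blast
qed

lemma norm_coprime:
  fixes n p :: nat
  assumes "squarefree n" "prime p" "p dvd n" "\<not> int p dvd N" "[N = 1] (mod int (n div p))"
  shows "coprime (int n) N"
proof -
  have nn: "int n = int p * int (n div p)" using sqf_split[OF assms(1-3)] by (metis of_nat_mult)
  have "prime (int p)" using assms(2) by simp
  then have c1: "coprime (int p) N" using assms(4) by (simp add: prime_imp_coprime)
  have "coprime 1 (int (n div p))" by simp
  then have "coprime N (int (n div p))" using cong_imp_coprime[OF cong_sym[OF assms(5)]] by blast
  then have c2: "coprime (int (n div p)) N" by (simp add: ac_simps)
  show ?thesis unfolding nn using c1 c2 by simp
qed

definition psi :: "int \<Rightarrow> complex \<Rightarrow> int" where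
  "psi s z = \<lfloor>Re z\<rfloor> + \<lfloor>Im z\<rfloor> * s"

lemma psi_gi: "psi s (gi a b) = a + b * s"
  by (simp add: psi_def gi_def)

lemma psi_gcong:
  assumes "z \<in> gauss_ints" "w \<in> gauss_ints" "gcong p z w"
  shows "[psi s z = psi s w] (mod int p)"
proof -
  obtain a b c d where zw: "z = gi a b" "w = gi c d" using assms gauss_ints_iff by metis
  then have "[a = c] (mod int p)" "[b = d] (mod int p)" using assms(3) by (simp_all add: gcong_gi)
  then have "[a + b * s = c + d * s] (mod int p)" by (intro cong_add cong_mult cong_refl)
  then show ?thesis by (simp add: zw psi_gi)
qed

lemma psi_mult:
  assumes s: "[s^2 = -1] (mod int p)" and "z \<in> gauss_ints" "w \<in> gauss_ints"
  shows "[psi s (z * w) = psi s z * psi s w] (mod int p)"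
proof -
  obtain a b c d where zw: "z = gi a b" "w = gi c d" using assms gauss_ints_iff by metis
  have "int p dvd (s^2 + 1)" using s by (simp add: cong_iff_dvd_diff)
  then have "int p dvd (- (b * d) * (s^2 + 1))" by simp
  moreover have "- (b * d) * (s^2 + 1) = (a*c - b*d + (a*d + b*c) * s) - (a + b*s) * (c + d*s)"
    by (simp add: algebra_simps power2_eq_square)
  ultimately have "int p dvd (a*c - b*d + (a*d + b*c) * s) - (a + b*s) * (c + d*s)"
    by metis
  then have "[a*c - b*d + (a*d + b*c) * s = (a + b*s) * (c + d*s)] (mod int p)"
    by (simp add: cong_iff_dvd_diff)
  then show ?thesis by (simp add: zw gi_mult psi_gi)
qed

lemma psi_one: "psi s 1 = 1"
  by (simp add: psi_def)

lemma psi_pow: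
  assumes s: "[s^2 = -1] (mod int p)" and z: "z \<in> gauss_ints"
  shows "[psi s (z ^ k) = psi s z ^ k] (mod int p)"
proof (induction k)
  case 0 then show ?case by (simp add: psi_one)
next
  case (Suc k)
  have "[psi s (z * z ^ k) = psi s z * psi s (z ^ k)] (mod int p)"
    using psi_mult[OF s z] z by simp
  moreover have "[psi s z * psi s (z ^ k) = psi s z * psi s z ^ k] (mod int p)"
    using Suc by (intro cong_mult cong_refl)
  ultimately show ?case by (simp add: cong_trans)
qed

lemma carm_mod_p:
  fixes n p :: nat
  assumes carm: "carmichael n" and cop: "coprime a n" and p: "p dvd n"
  shows "[int a ^ (n - 1) = 1] (mod int p)"
proof -
  have "[a ^ (n - 1) = 1] (mod n)" using carm cop by (simp add: carmichael_def)
  then have "[a ^ (n - 1) = 1] (mod p)" using p by (rule cong_dvd_modulus_nat)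
  then have "[int (a ^ (n - 1)) = int 1] (mod int p)" by (simp only: cong_int_iff)
  then show ?thesis by simp
qed

lemma fwd_1mod4:
  fixes n p :: nat
  assumes carm: "carmichael n" and gc: "gaussian_carmichael n" and n4: "n mod 4 = 3"
    and sq: "squarefree n" and p: "prime p" "p dvd n" and p1: "p mod 4 = 1"
  shows False
proof -
  have p2: "p \<ge> 2" using p(1) by (rule prime_ge_2_nat)
  obtain s where s: "[s^2 = -1] (mod int p)" using minus1_res p(1) p1 by blast
  obtain a where a: "[a = 3*s] (mod int p)" "[a = 1] (mod int (n div p))" using crt_pair[OF sq p] by blast
  obtain b where b: "[b = 1] (mod int p)" "[b = 0] (mod int (n div p))" using crt_pair[OF sq p] by blast
  define z where "z = gi a b"
  have zG: "z \<in> gauss_ints" by (simp add: z_def)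
  define N where "N = a^2 + b^2"
  have c0: "[N = (3*s)^2 + 1^2] (mod int p)" unfolding N_def using a(1) b(1) by (intro cong_add cong_pow)
  have e: "(3*s)^2 + 1^2 = 9 * s^2 + 1" by (simp add: power2_eq_square)
  have c1: "[N = 9 * s^2 + 1] (mod int p)" using c0 unfolding e .
  have "[9 * s^2 + 1 = 9 * (-1) + 1] (mod int p)" using s by (intro cong_add cong_mult cong_refl)
  then have c2: "[9 * s^2 + 1 = -8] (mod int p)" by simp
  have Np: "[N = -8] (mod int p)" using c1 c2 by (rule cong_trans)
  have "[N = 1^2 + 0^2] (mod int (n div p))" unfolding N_def using a(2) b(2) by (intro cong_add cong_pow)
  then have Nm: "[N = 1] (mod int (n div p))" by simp
  have ndvd: "\<not> int p dvd N"
  proof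
    assume "int p dvd N"
    then have "[N = 0] (mod int p)" by (simp add: cong_0_iff)
    then have "[-8 = 0] (mod int p)" using cong_trans[OF cong_sym[OF Np]] by blast
    then have "int p dvd int 8" by (simp add: cong_iff_dvd_diff)
    then have p8: "p dvd 8" by (simp only: of_nat_dvd_iff)
    then have "p \<le> 8" by (simp add: dvd_imp_le)
    then have "p = 5" using p1 p2 by presburger
    then show False using p8 by simp
  qed
  have cop: "coprime (int n) (gnorm z)"
    using norm_coprime[OF sq p ndvd Nm] by (simp add: z_def gnorm_gi N_def)
  obtain w where wG: "w \<in> gauss_ints" and w1: "gcong n (cnj z * w) 1"
    and w2: "gcong n ((z * w) ^ (n + 1)) 1"
    using gc zG cop by (auto simp: gaussian_carmichael_def gaussian_fermat_psp_def FF3[OF n4])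
  have w1p: "gcong p (cnj z * w) 1" using w1 p(2) gcong_dvd by blast
  have w2p: "gcong p ((z * w) ^ (n + 1)) 1" using w2 p(2) gcong_dvd by blast
  define W where "W = psi s w"
  have czG: "cnj z \<in> gauss_ints" using zG by simp
  have pcz: "[psi s (cnj z) = 2 * s] (mod int p)"
  proof -
    have "[-b = -1] (mod int p)" using b(1) by (simp add: cong_minus_minus_iff)
    then have "[a + (-b) * s = 3*s + (-1) * s] (mod int p)" using a(1) by (intro cong_add cong_mult cong_refl)
    then show ?thesis by (simp add: z_def gi_cnj psi_gi)
  qed
  have pz: "[psi s z = 4 * s] (mod int p)"
  proof -
    have "[a + b * s = 3*s + 1 * s] (mod int p)" using a(1) b(1) by (intro cong_add cong_mult cong_refl)
    then show ?thesis by (simp add: z_def psi_gi)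
  qed
  have A: "[2 * s * W = 1] (mod int p)"
  proof -
    have "[psi s (cnj z * w) = psi s 1] (mod int p)" using w1p czG wG by (intro psi_gcong) auto
    then have 1: "[psi s (cnj z * w) = 1] (mod int p)" by (simp add: psi_one)
    have 2: "[psi s (cnj z * w) = psi s (cnj z) * W] (mod int p)" unfolding W_def using s czG wG by (rule psi_mult)
    have 3: "[psi s (cnj z) * W = 2 * s * W] (mod int p)" using pcz by (intro cong_mult cong_refl)
    show ?thesis using cong_trans[OF cong_sym[OF 3] cong_trans[OF cong_sym[OF 2] 1]] .
  qed
  have B: "[2 ^ (n + 1) = 1] (mod int p)"
  proof -
    have "[psi s ((z * w) ^ (n + 1)) = psi s 1] (mod int p)" using w2p zG wG by (intro psi_gcong) auto
    then have 1: "[psi s ((z * w) ^ (n + 1)) = 1] (mod int p)" by (simp add: psi_one)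
    have 2: "[psi s ((z * w) ^ (n + 1)) = psi s (z * w) ^ (n + 1)] (mod int p)" using s zG wG by (intro psi_pow) auto
    have 3: "[psi s (z * w) = psi s z * W] (mod int p)" unfolding W_def using s zG wG by (rule psi_mult)
    have 4: "[psi s z * W = 4 * s * W] (mod int p)" using pz by (intro cong_mult cong_refl)
    have 5: "[4 * s * W = 2 * (2 * s * W)] (mod int p)" by (simp add: algebra_simps)
    have 6: "[2 * (2 * s * W) = 2 * 1] (mod int p)" using A by (intro cong_mult cong_refl)
    have "[psi s (z * w) = 2 * 1] (mod int p)" using cong_trans[OF 3 cong_trans[OF 4 cong_trans[OF 5 6]]] .
    then have "[psi s (z * w) = 2] (mod int p)" by simp
    then have 7: "[psi s (z * w) ^ (n + 1) = 2 ^ (n + 1)] (mod int p)" by (rule cong_pow)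
    show ?thesis using cong_trans[OF cong_sym[OF 7] cong_trans[OF cong_sym[OF 2] 1]] .
  qed
  have "odd n" using n4 by presburger
  then have "coprime (2::nat) n" by simp
  then have C: "[int 2 ^ (n - 1) = 1] (mod int p)" using carm_mod_p[OF carm _ p(2)] by blast
  have n1: "n \<ge> 1" using n4 by presburger
  have "(2::int) ^ (n + 1) = 4 * 2 ^ (n - 1)"
  proof -
    have "n + 1 = 2 + (n - 1)" using n1 by simp
    then have "(2::int) ^ (n + 1) = 2 ^ 2 * 2 ^ (n - 1)" by (metis power_add)
    then show ?thesis by simp
  qed
  then have B': "[4 * 2 ^ (n - 1) = 1] (mod int p)" using B by simp
  have M: "[4 * (2::int) ^ (n - 1) = 4 * 1] (mod int p)" using C by (intro cong_mult cong_refl) simp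
  have "[1 = 4 * 1] (mod int p)" using cong_trans[OF cong_sym[OF B'] M] .
  then have "[1 = 4] (mod int p)" by simp
  then have "int p dvd int 3" by (simp add: cong_iff_dvd_diff)
  then have p3: "p dvd 3" by (simp only: of_nat_dvd_iff)
  then have "p \<le> 3" by (simp add: dvd_imp_le)
  then show False using p1 p2 by presburger
qed

lemma fwd_3mod4:
  fixes n p :: nat
  assumes carm: "carmichael n" and gc: "gaussian_carmichael n" and n4: "n mod 4 = 3"
    and sq: "squarefree n" and p: "prime p" "p dvd n" and p3: "p mod 4 = 3"
  shows "(p + 1) dvd (n + 1) \<and> (p - 1) dvd (n - 1)"
proof -
  define R where "R = GF (int p)"
  have p1: "int p > 1" using p(1) prime_gt_1_nat by auto
  have p1': "p \<ge> 2" using p(1) by (rule prime_ge_2_nat)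
  interpret F: field R unfolding R_def using GF_field[OF p(1) p3] .
  obtain g where gC: "g \<in> carrier R" and g0: "g \<noteq> \<zero>\<^bsub>R\<^esub>"
    and gord: "\<forall>k. g [^]\<^bsub>R\<^esub> k = \<one>\<^bsub>R\<^esub> \<longleftrightarrow> (p * p - 1) dvd k"
    using GF_gen[OF p(1) p3] unfolding R_def by blast
  obtain a0 b0 where g: "g = (a0, b0)" by (cases g)
  have rng: "0 \<le> a0" "a0 < int p" "0 \<le> b0" "b0 < int p" using gC g by (auto simp: R_def GF_simps)
  obtain a where a: "[a = a0] (mod int p)" "[a = 1] (mod int (n div p))" using crt_pair[OF sq p] by blast
  obtain b where b: "[b = b0] (mod int p)" "[b = 0] (mod int (n div p))" using crt_pair[OF sq p] by blast
  define z where "z = gi a b"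
  have zG: "z \<in> gauss_ints" by (simp add: z_def)
  have amod: "a mod int p = a0" using a(1) rng by (simp add: cong_def)
  have bmod: "b mod int p = b0" using b(1) rng by (simp add: cong_def)
  have phiz: "phi (int p) z = g" by (simp add: z_def phi_gi amod bmod g)
  define N where "N = a^2 + b^2"
  have ndvd: "\<not> int p dvd N"
  proof
    assume "int p dvd N"
    then have "int p dvd a" "int p dvd b" using sumsq_zero' p(1) p3 unfolding N_def by blast+
    then have "a0 = 0" "b0 = 0" using amod bmod by simp_all
    then show False using g0 g by (simp add: R_def GF_simps)
  qed
  have "[N = 1^2 + 0^2] (mod int (n div p))" unfolding N_def using a(2) b(2) by (intro cong_add cong_pow)
  then have Nm: "[N = 1] (mod int (n div p))" by simp
  have copN: "coprime (int n) N" using norm_coprime[OF sq p ndvd Nm] .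
  then have cop: "coprime (int n) (gnorm z)" by (simp add: z_def gnorm_gi N_def)
  obtain w where wG: "w \<in> gauss_ints" and w1: "gcong n (cnj z * w) 1"
    and w2: "gcong n ((z * w) ^ (n + 1)) 1"
    using gc zG cop by (auto simp: gaussian_carmichael_def gaussian_fermat_psp_def FF3[OF n4])
  have w1p: "gcong p (cnj z * w) 1" using w1 p(2) gcong_dvd by blast
  have w2p: "gcong p ((z * w) ^ (n + 1)) 1" using w2 p(2) gcong_dvd by blast
  define h where "h = phi (int p) w"
  have hC: "h \<in> carrier R" unfolding h_def R_def using p1 by (simp add: phi_carrier)
  have czG: "cnj z \<in> gauss_ints" using zG by simp
  have "gcong p (z ^ p) (cnj z)" using frobenius[OF p(1) p3 zG] .
  then have "phi (int p) (z ^ p) = phi (int p) (cnj z)" using zG czG by (simp add: phi_gcong)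
  then have phicz: "phi (int p) (cnj z) = g [^]\<^bsub>R\<^esub> p"
    using phi_pow[OF zG p1, of p] phiz by (simp add: R_def)
  have E1: "g [^]\<^bsub>R\<^esub> p \<otimes>\<^bsub>R\<^esub> h = \<one>\<^bsub>R\<^esub>"
  proof -
    have "phi (int p) (cnj z * w) = phi (int p) 1" using w1p czG wG by (simp add: phi_gcong)
    then show ?thesis using phi_mult[OF czG wG, of "int p"] phi_one[OF p1] phicz
      by (simp add: R_def h_def)
  qed
  have E2: "(g \<otimes>\<^bsub>R\<^esub> h) [^]\<^bsub>R\<^esub> (n + 1) = \<one>\<^bsub>R\<^esub>"
  proof -
    have zwG: "z * w \<in> gauss_ints" using zG wG by simp
    have "phi (int p) ((z * w) ^ (n + 1)) = phi (int p) 1" using w2p zwG by (simp add: phi_gcong)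
    then show ?thesis using phi_pow[OF zwG p1, of "n + 1"] phi_mult[OF zG wG, of "int p"] phi_one[OF p1] phiz
      by (simp add: R_def h_def)
  qed
  define A where "A = g [^]\<^bsub>R\<^esub> (n + 1)"
  define H where "H = h [^]\<^bsub>R\<^esub> (n + 1)"
  have AC: "A \<in> carrier R" and HC: "H \<in> carrier R" using gC hC by (simp_all add: A_def H_def)
  have AH: "A \<otimes>\<^bsub>R\<^esub> H = \<one>\<^bsub>R\<^esub>" using E2 unfolding A_def H_def by (simp only: F.nat_pow_distrib[OF gC hC])
  have BH: "(g [^]\<^bsub>R\<^esub> p) [^]\<^bsub>R\<^esub> (n + 1) \<otimes>\<^bsub>R\<^esub> H = \<one>\<^bsub>R\<^esub>"
  proof -
    have "(g [^]\<^bsub>R\<^esub> p \<otimes>\<^bsub>R\<^esub> h) [^]\<^bsub>R\<^esub> (n + 1) = \<one>\<^bsub>R\<^esub>" using E1 by simp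
    then show ?thesis unfolding H_def using gC by (simp only: F.nat_pow_distrib[OF F.nat_pow_closed[OF gC] hC])
  qed
  have H0: "H \<noteq> \<zero>\<^bsub>R\<^esub>" using AH AC by auto
  have A0: "A \<noteq> \<zero>\<^bsub>R\<^esub>" using AH HC by auto
  have "A \<otimes>\<^bsub>R\<^esub> H = (g [^]\<^bsub>R\<^esub> p) [^]\<^bsub>R\<^esub> (n + 1) \<otimes>\<^bsub>R\<^esub> H" using AH BH by simp
  moreover have BC: "(g [^]\<^bsub>R\<^esub> p) [^]\<^bsub>R\<^esub> (n + 1) \<in> carrier R" using gC by simp
  ultimately have "A = (g [^]\<^bsub>R\<^esub> p) [^]\<^bsub>R\<^esub> (n + 1)" using F.m_rcancel[OF H0 HC AC BC] by blast
  also have "\<dots> = g [^]\<^bsub>R\<^esub> ((p - 1) * (n + 1) + (n + 1))"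
  proof -
    obtain q where q: "p = Suc q" using p1' by (cases p) auto
    have eq: "p * (n + 1) = (p - 1) * (n + 1) + (n + 1)" unfolding q by simp
    have "(g [^]\<^bsub>R\<^esub> p) [^]\<^bsub>R\<^esub> (n + 1) = g [^]\<^bsub>R\<^esub> (p * (n + 1))" using F.nat_pow_pow[OF gC] .
    then show ?thesis by (simp only: eq)
  qed
  also have "\<dots> = g [^]\<^bsub>R\<^esub> ((p - 1) * (n + 1)) \<otimes>\<^bsub>R\<^esub> A" unfolding A_def using F.nat_pow_mult[OF gC, of "(p - 1) * (n + 1)" "n + 1"] by (rule sym)
  finally have "\<one>\<^bsub>R\<^esub> \<otimes>\<^bsub>R\<^esub> A = g [^]\<^bsub>R\<^esub> ((p - 1) * (n + 1)) \<otimes>\<^bsub>R\<^esub> A" using AC by simp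
  moreover have XC: "g [^]\<^bsub>R\<^esub> ((p - 1) * (n + 1)) \<in> carrier R" using gC by simp
  ultimately have "\<one>\<^bsub>R\<^esub> = g [^]\<^bsub>R\<^esub> ((p - 1) * (n + 1))" using F.m_rcancel[OF A0 AC F.one_closed XC] by blast
  then have "g [^]\<^bsub>R\<^esub> ((p - 1) * (n + 1)) = \<one>\<^bsub>R\<^esub>" by (rule sym)
  then have d1: "(p * p - 1) dvd (p - 1) * (n + 1)" using gord by blast
  have pp: "p * p - 1 = (p - 1) * (p + 1)" using p1' by (simp add: algebra_simps)
  have pm0: "p - 1 > 0" using p1' by simp
  have "(p - 1) * (p + 1) dvd (p - 1) * (n + 1)" using d1 unfolding pp .
  then have r1: "(p + 1) dvd (n + 1)" using nat_mult_dvd_cancel1[OF pm0, of "p + 1" "n + 1"] by blast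
  have N0: "N \<ge> 0" by (simp add: N_def)
  have "coprime (nat \<bar>N\<bar>) n" using copN by (simp add: ac_simps)
  then have "[int (nat \<bar>N\<bar>) ^ (n - 1) = 1] (mod int p)" using carm_mod_p[OF carm _ p(2)] by blast
  then have CN: "[N ^ (n - 1) = 1] (mod int p)" using N0 by simp
  have zcz: "z * cnj z = gi N 0" by (simp add: z_def gi_cnj gi_mult N_def power2_eq_square)
  have "gcong p (gi (N ^ (n - 1)) 0) (gi 1 0)" using CN by (simp add: gcong_gi)
  moreover have "gi (N ^ (n - 1)) 0 = (z * cnj z) ^ (n - 1)"
    by (simp add: zcz gi_of_int[symmetric])
  ultimately have "gcong p ((z * cnj z) ^ (n - 1)) 1" by (simp add: gi_one[symmetric])
  then have "phi (int p) ((z * cnj z) ^ (n - 1)) = phi (int p) 1" using zG czG by (simp add: phi_gcong)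
  moreover have "phi (int p) ((z * cnj z) ^ (n - 1)) = g [^]\<^bsub>R\<^esub> (Suc p * (n - 1))"
  proof -
    have zczG: "z * cnj z \<in> gauss_ints" using zG by simp
    have "phi (int p) ((z * cnj z) ^ (n - 1)) = (g \<otimes>\<^bsub>R\<^esub> g [^]\<^bsub>R\<^esub> p) [^]\<^bsub>R\<^esub> (n - 1)"
      using phi_pow[OF zczG p1, of "n - 1"] phi_mult[OF zG czG, of "int p"] phiz phicz by (simp add: R_def)
    also have "g \<otimes>\<^bsub>R\<^esub> g [^]\<^bsub>R\<^esub> p = g [^]\<^bsub>R\<^esub> (Suc p)" using F.nat_pow_Suc2[OF gC, of p] by (rule sym)
    also have "(g [^]\<^bsub>R\<^esub> (Suc p)) [^]\<^bsub>R\<^esub> (n - 1) = g [^]\<^bsub>R\<^esub> (Suc p * (n - 1))" by (rule F.nat_pow_pow[OF gC])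
    finally show ?thesis .
  qed
  ultimately have "g [^]\<^bsub>R\<^esub> (Suc p * (n - 1)) = \<one>\<^bsub>R\<^esub>" using phi_one[OF p1] by (simp add: R_def)
  then have d2: "(p * p - 1) dvd Suc p * (n - 1)" using gord by blast
  have "(p - 1) * (p + 1) dvd Suc p * (n - 1)" using d2 unfolding pp .
  then have "(p + 1) * (p - 1) dvd (p + 1) * (n - 1)" by (simp only: mult.commute[of "p - 1"] Suc_eq_plus1)
  then have r2: "(p - 1) dvd (n - 1)" using nat_mult_dvd_cancel1[of "p + 1" "p - 1" "n - 1"] by simp
  show ?thesis using r1 r2 by blast
qed

theorem mainTheorem16:
  fixes n :: nat
  assumes "n > 0" and "n mod 4 = 3"
  shows "(carmichael n \<and> gaussian_carmichael n) \<longleftrightarrow>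
         (williams1 n \<and> (\<forall>p. prime p \<and> p dvd n \<longrightarrow> p mod 4 = 3))"
proof
  assume h: "carmichael n \<and> gaussian_carmichael n"
  have carm: "carmichael n" and gc: "gaussian_carmichael n" using h by auto
  have sq: "squarefree n" using carm_sqf[OF carm] .
  have p3: "p mod 4 = 3" if p: "prime p" "p dvd n" for p
  proof -
    have "odd p"
    proof
      assume "even p"
      then have "2 dvd n" using p(2) by (rule dvd_trans)
      then show False using assms(2) by presburger
    qed
    then have "p mod 4 = 1 \<or> p mod 4 = 3" by presburger
    moreover have "p mod 4 \<noteq> 1" using fwd_1mod4[OF carm gc assms(2) sq p] by blast
    ultimately show ?thesis by blast
  qed
  have "(p + 1) dvd (n + 1) \<and> (p - 1) dvd (n - 1)" if p: "prime p" "p dvd n" for p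
    using fwd_3mod4[OF carm gc assms(2) sq p p3[OF p]] .
  moreover have "composite n" using carm by (simp add: carmichael_def)
  ultimately show "williams1 n \<and> (\<forall>p. prime p \<and> p dvd n \<longrightarrow> p mod 4 = 3)"
    using sq p3 by (auto simp: williams1_def)
next
  assume h: "williams1 n \<and> (\<forall>p. prime p \<and> p dvd n \<longrightarrow> p mod 4 = 3)"
  have comp: "composite n" and sq: "squarefree n"
    and wp: "\<And>p. prime p \<Longrightarrow> p dvd n \<Longrightarrow> (p + 1) dvd (n + 1) \<and> (p - 1) dvd (n - 1)"
    and p3: "\<And>p. prime p \<Longrightarrow> p dvd n \<Longrightarrow> p mod 4 = 3"
    using h by (auto simp: williams1_def)
  have "carmichael n"
    unfolding carmichael_def using comp korselt_rev[OF sq] wp by blast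
  moreover have "gaussian_carmichael n"
    using gauss_rev[OF sq assms(2) comp] wp p3 by blast
  ultimately show "carmichael n \<and> gaussian_carmichael n" by blast
qed

end
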